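(* Let $X\neq\{0\}$ be a normed space. (i) If $X$ satisfies the $t$-Hanner inequality for some $1<t\le2$, then $K^*_{q,t}(X)=C^*(q,t)$ for every $2\le q<\infty$, and $K_{t,p}(X)=1$ for every $1<p\le t'$, where $\frac1t+\frac1{t'}=1$. (ii) If $X$ satisfies the $r$-Hanner inequality for some $2\le r<\infty$, then $K_{p,r}(X)=C(p,r)$ for every $1<p\le2$, and $K^*_{r,q}(X)=1$ for every $r'\le q<\infty$, where $\frac1r+\frac1{r'}=1$.
   Context: For $1<t\le2$, a normed space $X$ satisfies the $t$-Hanner inequality if $\|x+y\|^t+\|x-y\|^t\ge(\|x\|+\|y\|)^t+\big|\|x\|-\|y\|\big|^t$ for all $x,y\in X$; for $2\le r<\infty$, it satisfies the $r$-Hanner inequality if $\|x+y\|^r+\|x-y\|^r\le(\|x\|+\|y\|)^r+\big|\|x\|-\|y\|\big|^r$ for all $x,y\in X$. For a normed space $X$: for $1<t\le2$ and $1<p<\infty$, $K_{t,p}(X)$ is the smallest constant $K\ge0$ such that $\big(\frac{\|x+y\|^p+\|x-y\|^p}{2}\big)^{1/p}\le(\|x\|^t+\|Ky\|^t)^{1/t}$ for all $x,y\in X$; for $2\le r<\infty$ and $1<q<\infty$, $K^*_{r,q}(X)$ is the smallest constant $K>0$ such that $\big(\frac{\|x+y\|^q+\|x-y\|^q}{2}\big)^{1/q}\ge(\|x\|^r+\|K^{-1}y\|^r)^{1/r}$ for all $x,y\in X$. $C(t,p):=K_{t,p}(\mathbb C)$ and $C^*(r,q):=K^*_{r,q}(\mathbb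 C)$, i.e. the same best constants for $X=\mathbb C$ with the absolute value. *)

theory Defs
  imports "HOL-Analysis.Analysis"
begin

definition t_Hanner :: "'a::real_normed_vector itself \<Rightarrow> real \<Rightarrow> bool" where
  "t_Hanner _ t \<longleftrightarrow> (\<forall>x y :: 'a.
     norm (x + y) powr t + norm (x - y) powr t \<ge>
     (norm x + norm y) powr t + \<bar>norm x - norm y\<bar> powr t)"

definition r_Hanner :: "'a::real_normed_vector itself \<Rightarrow> real \<Rightarrow> bool" where
  "r_Hanner _ r \<longleftrightarrow> (\<forall>x y :: 'a.
     norm (x + y) powr r + norm (x - y) powr r \<le>
     (norm x + norm y) powr r + \<bar>norm x - norm y\<bar> powr r)"

definition K_tp :: "'a::real_normed_vector itself \<Rightarrow> real \<Rightarrow> real \<Rightarrow> real" where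
  "K_tp _ t p = Inf {K. K \<ge> 0 \<and> (\<forall>x y :: 'a.
     ((norm (x + y) powr p + norm (x - y) powr p) / 2) powr (1 / p) \<le>
     (norm x powr t + norm (K *\<^sub>R y) powr t) powr (1 / t))}"

definition Kstar_rq :: "'a::real_normed_vector itself \<Rightarrow> real \<Rightarrow> real \<Rightarrow> real" where
  "Kstar_rq _ r q = Inf {K. K > 0 \<and> (\<forall>x y :: 'a.
     ((norm (x + y) powr q + norm (x - y) powr q) / 2) powr (1 / q) \<ge>
     (norm x powr r + norm (inverse K *\<^sub>R y) powr r) powr (1 / r))}"

definition C_tp :: "real \<Rightarrow> real \<Rightarrow> real" where
  "C_tp t p = K_tp TYPE(complex) t p"

definition Cstar_rq :: "real \<Rightarrow> real \<Rightarrow> real" where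
  "Cstar_rq r q = Kstar_rq TYPE(complex) r q"

end

theory Submission
  imports Defs
begin



lemma gch_rec:
  fixes a :: real
  shows "of_nat (Suc n) * (a gchoose Suc n) = (a - of_nat n) * (a gchoose n)"
  using gbinomial_mult_1[of a n] by (simp add: algebra_simps)

lemma gchoose_odd_nonneg:
  fixes p :: real
  assumes "1 < p" "p \<le> 2"
  shows "((p - 1) gchoose (2*k+1)) \<ge> 0"
proof (induction k)
  case 0
  then show ?case using assms by simp
next
  case (Suc k)
  define c where "c = (p - 1) gchoose (2*k+1)"
  have r1: "of_nat (2*k+2) * ((p - 1) gchoose (2*k+2)) = (p - 1 - of_nat (2*k+1)) * c"
    using gbinomial_mult_1[of "p - 1" "2*k+1"] unfolding c_def by (simp add: algebra_simps)
  have r2: "of_nat (Suc (2*k+2)) * ((p - 1) gchoose (Suc (2*k+2))) = (p - 1 - of_nat (2*k+2)) * ((p - 1) gchoose (2*k+2))"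
    by (rule gch_rec)
  have "(p - 1) gchoose (2*k+2) \<le> 0"
  proof -
    have "(p - 1 - of_nat (2*k+1)) * c \<le> 0"
      using Suc assms unfolding c_def by (intro mult_nonpos_nonneg) auto
    with r1 have "of_nat (2*k+2) * ((p - 1) gchoose (2*k+2)) \<le> 0" by simp
    thus ?thesis by (simp add: mult_le_0_iff)
  qed
  hence "(p - 1 - of_nat (2*k+2)) * ((p - 1) gchoose (2*k+2)) \<ge> 0"
    using assms by (intro mult_nonpos_nonpos) auto
  with r2 have "of_nat (Suc (2*k+2)) * ((p - 1) gchoose (Suc (2*k+2))) \<ge> 0" by simp
  hence "((p - 1) gchoose (Suc (2*k+2))) \<ge> 0"
    by (simp add: zero_le_mult_iff del: of_nat_Suc)
  moreover have "Suc (2*k+2) = 2 * Suc k + 1" by simp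
  ultimately show ?case by metis
qed

lemma amgm_term:
  fixes p r y :: real and N :: nat
  assumes "1 < p" "p \<le> 2" "r * (p - 1) = p" "0 \<le> y" "N \<ge> 2"
  shows "of_nat N * (y powr r) ^ (N - 1) \<le> p * y ^ N + (of_nat N - p) * (y powr r) ^ N"
proof (cases "y = 0")
  case True
  then show ?thesis using assms by (simp add: power_0_left)
next
  case False
  hence yp: "y > 0" using assms by auto
  have Np: "real N > 0" using assms by simp
  have "(y ^ N) powr (p / N) * ((y powr r) ^ N) powr ((N - p) / N)
          \<le> (p / N) * y ^ N + ((N - p) / N) * (y powr r) ^ N"
    using assms yp Np by (intro Youngs_inequality_0) (auto simp: field_simps)
  moreover have "(y ^ N) powr (p / N) * ((y powr r) ^ N) powr ((N - p) / N) = (y powr r) ^ (N - 1)"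
  proof -
    have "(y ^ N) powr (p / N) = y powr p"
      using yp Np by (simp add: powr_realpow[symmetric] powr_powr)
    moreover have "((y powr r) ^ N) powr ((N - p) / N) = y powr (r * (N - p))"
      using yp Np by (simp add: powr_realpow[symmetric] powr_powr)
    moreover have "(y powr r) ^ (N - 1) = y powr (r * (real N - 1))"
      using yp assms by (simp add: powr_realpow[symmetric] powr_powr of_nat_diff)
    moreover have "p + r * (N - p) = r * (real N - 1)" using assms by (simp add: algebra_simps)
    ultimately show ?thesis by (simp add: powr_add[symmetric])
  qed
  ultimately have "(y powr r) ^ (N - 1) \<le> (p / N) * y ^ N + ((N - p) / N) * (y powr r) ^ N" by simp
  hence "N * (y powr r) ^ (N - 1) \<le> N * ((p / N) * y ^ N + ((N - p) / N) * (y powr r) ^ N)"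
    using Np by simp
  also have "\<dots> = p * y ^ N + (of_nat N - p) * (y powr r) ^ N" using Np by (simp add: field_simps)
  finally show ?thesis .
qed

lemma clarkson_core:
  fixes p r y :: real
  assumes p: "1 < p" "p \<le> 2" and r: "r * (p - 1) = p" and y: "0 \<le> y" "y < 1"
  shows "(1 + y powr r) powr (p - 1) \<le> ((1 + y) powr p + (1 - y) powr p) / 2"
proof -
  have "r = p / (p - 1)" using p r by (simp add: field_simps)
  hence rpos: "r > 0" using p by simp
  define w where "w = y powr r"
  have w: "0 \<le> w" "w < 1" unfolding w_def using y rpos
    using powr_less_mono2[of r y 1] by auto
  define a where "a n = (p gchoose n) * (y ^ n + (- y) ^ n) / 2" for n
  define b where "b n = ((p - 1) gchoose n) * w ^ n" for n
  have sa: "a sums (((1 + y) powr p + (1 - y) powr p) / 2)"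
  proof -
    have "(\<lambda>n. (p gchoose n) * y ^ n) sums (1 + y) powr p"
      using y by (intro gen_binomial_real) auto
    moreover have "(\<lambda>n. (p gchoose n) * (-y) ^ n) sums (1 + - y) powr p"
      using y by (intro gen_binomial_real) auto
    ultimately have "(\<lambda>n. (p gchoose n) * y ^ n + (p gchoose n) * (-y) ^ n) sums ((1 + y) powr p + (1 - y) powr p)"
      by (simp add: sums_add)
    hence "(\<lambda>n. ((p gchoose n) * y ^ n + (p gchoose n) * (-y) ^ n) / 2) sums (((1 + y) powr p + (1 - y) powr p) / 2)"
      by (rule sums_divide)
    thus ?thesis unfolding a_def by (simp add: algebra_simps)
  qed
  have sb: "b sums ((1 + w) powr (p - 1))"
    unfolding b_def using w by (intro gen_binomial_real) auto
  define e where "e n = a n - b n" for n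
  have se: "e sums (((1 + y) powr p + (1 - y) powr p) / 2 - (1 + w) powr (p - 1))"
    unfolding e_def using sa sb by (rule sums_diff)
  have e0: "e 0 = 0" unfolding e_def a_def b_def by simp
  have se1: "(\<lambda>n. e (Suc n)) sums (((1 + y) powr p + (1 - y) powr p) / 2 - (1 + w) powr (p - 1))"
    using se e0 by (simp add: sums_Suc_iff)
  have sg: "(\<lambda>k. sum (\<lambda>n. e (Suc n)) {k * 2..<k * 2 + 2}) sums (((1 + y) powr p + (1 - y) powr p) / 2 - (1 + w) powr (p - 1))"
    using sums_group[OF se1, of 2] by simp
  have nn: "sum (\<lambda>n. e (Suc n)) {k * 2..<k * 2 + 2} \<ge> 0" for k
  proof -
    define N where "N = 2 * k + 2"
    define c where "c = (p - 1) gchoose (2*k+1)"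
    have c0: "c \<ge> 0" unfolding c_def using p by (rule gchoose_odd_nonneg)
    have Nsuc: "N = Suc (2*k+1)" unfolding N_def by simp
    have g1: "of_nat N * (p gchoose N) = p * c"
      unfolding Nsuc c_def using gbinomial_absorption[of "2*k+1" p] by simp
    have g2: "of_nat N * ((p - 1) gchoose N) = (p - of_nat N) * c"
      unfolding Nsuc c_def using gch_rec[of "2*k+1" "p - 1"] by (simp add: algebra_simps)
    have sumeq: "sum (\<lambda>n. e (Suc n)) {k * 2..<k * 2 + 2} = e (2*k+1) + e N"
      unfolding N_def by (simp add: numeral_2_eq_2 mult.commute)
    have eodd: "e (2*k+1) = - c * w ^ (N - 1)"
      unfolding e_def a_def b_def c_def N_def by simp
    have eN: "e N = (p gchoose N) * y ^ N - ((p - 1) gchoose N) * w ^ N"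
      unfolding e_def a_def b_def N_def by simp
    have Npos: "real N > 0" unfolding N_def by simp
    have "of_nat N * (e (2*k+1) + e N) = (of_nat N * (p gchoose N)) * y ^ N - (of_nat N * ((p - 1) gchoose N)) * w ^ N - of_nat N * c * w ^ (N - 1)"
      unfolding eodd eN by (simp add: algebra_simps)
    also have "\<dots> = c * (p * y ^ N + (of_nat N - p) * w ^ N - of_nat N * w ^ (N - 1))"
      unfolding g1 g2 by (simp add: algebra_simps)
    also have "\<dots> \<ge> 0"
      using amgm_term[OF p r y(1), of N] c0 unfolding w_def N_def by simp
    finally have "of_nat N * (e (2*k+1) + e N) \<ge> 0" .
    hence "e (2*k+1) + e N \<ge> 0" using Npos by (simp add: zero_le_mult_iff)
    thus ?thesis using sumeq by simp
  qed
  have "0 \<le> ((1 + y) powr p + (1 - y) powr p) / 2 - (1 + w) powr (p - 1)"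
    using sums_le[OF nn sums_zero sg] by simp
  thus ?thesis unfolding w_def by simp
qed

lemma clarkson_core':
  fixes p r y :: real
  assumes p: "1 < p" "p \<le> 2" and r: "r * (p - 1) = p" and y: "0 \<le> y" "y \<le> 1"
  shows "(1 + y powr r) powr (p - 1) \<le> ((1 + y) powr p + (1 - y) powr p) / 2"
proof (cases "y = 1")
  case True
  have "(2::real) powr (p - 1) = 2 powr p / 2" by (simp add: powr_diff)
  then show ?thesis using True p by simp
next
  case False
  then show ?thesis using clarkson_core[OF p r] y by simp
qed

lemma clarkson_H:
  fixes p r c d :: real
  assumes p: "1 < p" "p \<le> 2" and r: "r * (p - 1) = p" and cd: "0 \<le> d" "d \<le> c"
  shows "(c powr r + d powr r) powr (p - 1) \<le> ((c + d) powr p + (c - d) powr p) / 2"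
proof (cases "c = 0")
  case True
  then show ?thesis using cd p by simp
next
  case False
  hence cp: "c > 0" using cd by simp
  define y where "y = d / c"
  have y: "0 \<le> y" "y \<le> 1" unfolding y_def using cd cp by auto
  have d: "d = c * y" unfolding y_def using cp by simp
  have "(c powr r + d powr r) powr (p - 1) = (c powr r * (1 + y powr r)) powr (p - 1)"
    unfolding d using cp y by (simp add: powr_mult algebra_simps)
  also have "\<dots> = c powr p * (1 + y powr r) powr (p - 1)"
    using cp y by (simp add: powr_mult powr_powr r)
  also have "\<dots> \<le> c powr p * (((1 + y) powr p + (1 - y) powr p) / 2)"
    using clarkson_core'[OF p r y] by (intro mult_left_mono) auto
  also have "\<dots> = ((c + d) powr p + (c - d) powr p) / 2"
  proof -
    have "(c + d) = c * (1 + y)" "c - d = c * (1 - y)" unfolding d by (simp_all add: algebra_simps)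
    hence "(c + d) powr p = c powr p * (1 + y) powr p" "(c - d) powr p = c powr p * (1 - y) powr p"
      using cp y by (simp_all add: powr_mult)
    thus ?thesis by (simp add: algebra_simps)
  qed
  finally show ?thesis .
qed



lemma powr_concave0: "0 < s \<Longrightarrow> s \<le> 1 \<Longrightarrow> concave_on {0<..} (\<lambda>x::real. x powr s)"
  apply (intro f''_le0_imp_concave derivative_eq_intros | simp)+
  apply (rule mult_nonpos_nonneg)
   apply (rule mult_nonpos_nonneg)
  apply auto
  done

lemma pow_concave_pt:
  fixes s m u M :: real
  assumes s: "0 < s" "s \<le> 1" and mu: "0 \<le> m" "m \<le> u" "u \<le> M"
  shows "m powr s + M powr s \<le> u powr s + (m + M - u) powr s"
proof (cases "m = 0")
  case True
  show ?thesis
  proof (cases "M = 0")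
    case True
    hence "u = 0" "m = 0" using mu by linarith+
    then show ?thesis using \<open>M = 0\<close> by simp
  next
    case False
    hence Mp: "M > 0" using mu by simp
    have key: "x / M * M powr s \<le> x powr s" if "0 \<le> x" "x \<le> M" for x
    proof -
      have "x / M = (x / M) powr 1" using that Mp by simp
      also have "\<dots> \<le> (x / M) powr s" using that Mp s by (intro powr_mono') auto
      finally have "x / M * M powr s \<le> (x / M) powr s * M powr s"
        by (intro mult_right_mono) auto
      also have "\<dots> = x powr s" using that Mp by (simp add: powr_divide)
      finally show ?thesis .
    qed
    have "u / M * M powr s + (M - u) / M * M powr s \<le> u powr s + (M - u) powr s"
      using key[of u] key[of "M - u"] mu by simp
    moreover have "u / M * M powr s + (M - u) / M * M powr s = M powr s"
      using Mp by (simp add: field_simps)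
    ultimately show ?thesis using True by simp
  qed
next
  case False
  hence mp: "m > 0" using mu by simp
  show ?thesis
  proof (cases "M = m")
    case True
    then show ?thesis using mu by simp
  next
    case False
    hence Mm: "M > m" using mu by simp
    define l where "l = (M - u) / (M - m)"
    have l: "0 \<le> l" "l \<le> 1" unfolding l_def using mu Mm by auto
    have lM: "l * (M - m) = M - u" unfolding l_def using Mm by simp
    hence lM': "l * M - l * m = M - u" by (simp add: algebra_simps)
    have u: "u = l * m + (1 - l) * M" using lM' by (simp add: algebra_simps)
    have v: "m + M - u = (1 - l) * m + l * M" using lM' by (simp add: algebra_simps)
    have c: "concave_on {0<..} (\<lambda>x::real. x powr s)" using s by (rule powr_concave0)
    have "l * m powr s + (1 - l) * M powr s \<le> (l * m + (1 - l) * M) powr s"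
      using concave_onD[OF c, of "1 - l" m M] l mp Mm by simp
    hence i1: "l * m powr s + (1 - l) * M powr s \<le> u powr s" using u by simp
    have "(1 - l) * m powr s + l * M powr s \<le> ((1 - l) * m + l * M) powr s"
      using concave_onD[OF c, of l m M] l mp Mm by simp
    hence i2: "(1 - l) * m powr s + l * M powr s \<le> (m + M - u) powr s" using v by simp
    show ?thesis using i1 i2 by (simp add: algebra_simps)
  qed
qed

lemma pow_convex_pt:
  fixes s m u M :: real
  assumes s: "1 \<le> s" and mu: "0 \<le> m" "m \<le> u" "u \<le> M"
  shows "u powr s + (m + M - u) powr s \<le> m powr s + M powr s"
proof (cases "m = 0")
  case True
  show ?thesis
  proof (cases "M = 0")
    case True
    hence "u = 0" "m = 0" using mu by linarith+
    then show ?thesis using \<open>M = 0\<close> by simp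
  next
    case False
    hence Mp: "M > 0" using mu by simp
    have key: "x powr s \<le> x / M * M powr s" if "0 \<le> x" "x \<le> M" for x
    proof -
      have "x powr s = (x / M) powr s * M powr s" using that Mp by (simp add: powr_divide)
      also have "\<dots> \<le> (x / M) powr 1 * M powr s" using that Mp s by (intro mult_right_mono powr_mono') auto
      also have "\<dots> = x / M * M powr s" using that Mp by simp
      finally show ?thesis .
    qed
    have "u powr s + (M - u) powr s \<le> u / M * M powr s + (M - u) / M * M powr s"
      using key[of u] key[of "M - u"] mu by simp
    moreover have "u / M * M powr s + (M - u) / M * M powr s = M powr s"
      using Mp by (simp add: field_simps)
    ultimately show ?thesis using True by simp
  qed
next
  case False
  hence mp: "m > 0" using mu by simp
  show ?thesis
  proof (cases "M = m")
    case True
    then show ?thesis using mu by simp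
  next
    case False
    hence Mm: "M > m" using mu by simp
    define l where "l = (M - u) / (M - m)"
    have l: "0 \<le> l" "l \<le> 1" unfolding l_def using mu Mm by auto
    have lM: "l * (M - m) = M - u" unfolding l_def using Mm by simp
    hence lM': "l * M - l * m = M - u" by (simp add: algebra_simps)
    have u: "u = l * m + (1 - l) * M" using lM' by (simp add: algebra_simps)
    have v: "m + M - u = (1 - l) * m + l * M" using lM' by (simp add: algebra_simps)
    have c: "convex_on {0<..} (\<lambda>x::real. x powr s)" using s by (rule powr_convex)
    have "(l * m + (1 - l) * M) powr s \<le> l * m powr s + (1 - l) * M powr s"
      using convex_onD[OF c, of "1 - l" m M] l mp Mm by simp
    hence i1: "u powr s \<le> l * m powr s + (1 - l) * M powr s" using u by simp
    have "((1 - l) * m + l * M) powr s \<le> (1 - l) * m powr s + l * M powr s"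
      using convex_onD[OF c, of l m M] l mp Mm by simp
    hence i2: "(m + M - u) powr s \<le> (1 - l) * m powr s + l * M powr s" using v by simp
    show ?thesis using i1 i2 by (simp add: algebra_simps)
  qed
qed




lemma powr_sq_half: "0 \<le> (n::real) \<Longrightarrow> 0 < t \<Longrightarrow> n powr t = (n^2) powr (t/2)"
proof (cases "n = 0")
  case False
  assume n: "0 \<le> n" "0 < t"
  hence np: "n > 0" using False by simp
  have "n ^ 2 = n powr 2" using powr_realpow[OF np, of 2] by simp
  hence "(n^2) powr (t/2) = n powr (2 * (t/2))" by (simp only: powr_powr)
  thus ?thesis by simp
qed simp

lemma inner_hanner_data:
  fixes x y :: "'b::real_inner" and t :: real
  assumes "0 < t"
  defines "S \<equiv> norm x ^ 2 + norm y ^ 2" and "P \<equiv> norm x * norm y"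
  shows "norm (x + y) powr t + norm (x - y) powr t
           = (S + 2 * \<bar>x \<bullet> y\<bar>) powr (t/2) + (S - 2 * P + (S + 2 * P) - (S + 2 * \<bar>x \<bullet> y\<bar>)) powr (t/2)"
    and "(norm x + norm y) powr t + \<bar>norm x - norm y\<bar> powr t = (S - 2 * P) powr (t/2) + (S + 2 * P) powr (t/2)"
    and "0 \<le> S - 2 * P" "S - 2 * P \<le> S + 2 * \<bar>x \<bullet> y\<bar>" "S + 2 * \<bar>x \<bullet> y\<bar> \<le> S + 2 * P"
proof -
  have n1: "norm (x + y) ^ 2 = S + 2 * (x \<bullet> y)"
    unfolding S_def by (simp add: power2_norm_eq_inner inner_add inner_commute algebra_simps)
  have n2: "norm (x - y) ^ 2 = S - 2 * (x \<bullet> y)"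
    unfolding S_def by (simp add: power2_norm_eq_inner inner_diff inner_commute algebra_simps)
  have e: "S - 2 * P + (S + 2 * P) - (S + 2 * \<bar>x \<bullet> y\<bar>) = S - 2 * \<bar>x \<bullet> y\<bar>" by simp
  show "norm (x + y) powr t + norm (x - y) powr t
           = (S + 2 * \<bar>x \<bullet> y\<bar>) powr (t/2) + (S - 2 * P + (S + 2 * P) - (S + 2 * \<bar>x \<bullet> y\<bar>)) powr (t/2)"
  proof -
    have a1: "norm (x + y) powr t = (norm (x + y) ^ 2) powr (t/2)"
      by (rule powr_sq_half) (use assms in auto)
    have a2: "norm (x - y) powr t = (norm (x - y) ^ 2) powr (t/2)"
      by (rule powr_sq_half) (use assms in auto)
    have "(S + 2 * (x \<bullet> y)) powr (t/2) + (S - 2 * (x \<bullet> y)) powr (t/2)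
        = (S + 2 * \<bar>x \<bullet> y\<bar>) powr (t/2) + (S - 2 * \<bar>x \<bullet> y\<bar>) powr (t/2)"
    proof (cases "x \<bullet> y \<ge> 0")
      case True
      then show ?thesis by simp
    next
      case False
      hence "S + 2 * \<bar>x \<bullet> y\<bar> = S - 2 * (x \<bullet> y)" "S - 2 * \<bar>x \<bullet> y\<bar> = S + 2 * (x \<bullet> y)" by auto
      then show ?thesis by (simp only: add.commute)
    qed
    thus ?thesis unfolding e a1 a2 n1 n2 .
  qed
  show "(norm x + norm y) powr t + \<bar>norm x - norm y\<bar> powr t = (S - 2 * P) powr (t/2) + (S + 2 * P) powr (t/2)"
  proof -
    have q1: "(norm x + norm y) ^ 2 = S + 2 * P" "\<bar>norm x - norm y\<bar> ^ 2 = S - 2 * P"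
      unfolding S_def P_def by (simp_all add: power2_eq_square algebra_simps)
    have b1: "(norm x + norm y) powr t = ((norm x + norm y) ^ 2) powr (t/2)"
      by (rule powr_sq_half) (use assms in auto)
    have b2: "\<bar>norm x - norm y\<bar> powr t = (\<bar>norm x - norm y\<bar> ^ 2) powr (t/2)"
      by (rule powr_sq_half) (use assms in auto)
    show ?thesis unfolding b1 b2 q1 by (rule add.commute)
  qed
  have cs: "\<bar>x \<bullet> y\<bar> \<le> P" unfolding P_def by (rule Cauchy_Schwarz_ineq2)
  have "0 \<le> (norm x - norm y) ^ 2" by simp
  thus "0 \<le> S - 2 * P" unfolding S_def P_def by (simp add: power2_eq_square algebra_simps)
  show "S - 2 * P \<le> S + 2 * \<bar>x \<bullet> y\<bar>" "S + 2 * \<bar>x \<bullet> y\<bar> \<le> S + 2 * P"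
    using cs by (auto simp: P_def)
qed

lemma complex_t_Hanner: "0 < t \<Longrightarrow> t \<le> 2 \<Longrightarrow> t_Hanner TYPE(complex) t"
  unfolding t_Hanner_def
proof (intro allI)
  fix x y :: complex
  assume t: "0 < t" "t \<le> 2"
  note d = inner_hanner_data[OF t(1), of x y]
  show "(norm x + norm y) powr t + \<bar>norm x - norm y\<bar> powr t \<le> norm (x + y) powr t + norm (x - y) powr t"
    unfolding d(1,2) using t by (intro pow_concave_pt d(3-5)) auto
qed

lemma complex_r_Hanner: "2 \<le> r \<Longrightarrow> r_Hanner TYPE(complex) r"
  unfolding r_Hanner_def
proof (intro allI)
  fix x y :: complex
  assume r: "2 \<le> r"
  hence r0: "0 < r" by simp
  note d = inner_hanner_data[OF r0, of x y]
  show "norm (x + y) powr r + norm (x - y) powr r \<le> (norm x + norm y) powr r + \<bar>norm x - norm y\<bar> powr r"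
    unfolding d(1,2) using r by (intro pow_convex_pt d(3-5)) auto
qed



lemma power_mean2:
  fixes A B P Q :: real
  assumes "0 < P" "P \<le> Q" "0 \<le> A" "0 \<le> B"
  shows "((A powr P + B powr P) / 2) powr (1/P) \<le> ((A powr Q + B powr Q) / 2) powr (1/Q)"
proof -
  define s where "s = Q / P"
  have s1: "1 \<le> s" unfolding s_def using assms by simp
  define u where "u = A powr P"
  define v where "v = B powr P"
  have uv: "0 \<le> u" "0 \<le> v" unfolding u_def v_def by auto
  have e: "u + v - (u + v) / 2 = (u + v) / 2" "v + u - (u + v) / 2 = (u + v) / 2" by (simp_all add: field_simps)
  have key: "((u + v) / 2) powr s + ((u + v) / 2) powr s \<le> u powr s + v powr s"
  proof (cases "u \<le> v")
    case True
    have "((u + v) / 2) powr s + (u + v - (u + v) / 2) powr s \<le> u powr s + v powr s"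
      using True uv s1 by (intro pow_convex_pt) auto
    then show ?thesis unfolding e .
  next
    case False
    have "((u + v) / 2) powr s + (v + u - (u + v) / 2) powr s \<le> v powr s + u powr s"
      using False uv s1 by (intro pow_convex_pt) auto
    then show ?thesis unfolding e by (simp add: add.commute)
  qed
  have us: "u powr s = A powr Q" "v powr s = B powr Q"
    unfolding u_def v_def s_def using assms by (simp_all add: powr_powr)
  have "((u + v) / 2) powr s \<le> (A powr Q + B powr Q) / 2" using key us by simp
  hence "(((u + v) / 2) powr s) powr (1/Q) \<le> ((A powr Q + B powr Q) / 2) powr (1/Q)"
    using assms by (intro powr_mono2) auto
  moreover have "(((u + v) / 2) powr s) powr (1/Q) = ((u + v) / 2) powr (1/P)"
    unfolding s_def using assms by (simp add: powr_powr)
  ultimately show ?thesis unfolding u_def v_def by simp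
qed

lemma C1_aux:
  fixes t q A B :: real
  assumes t: "1 < t" "t \<le> 2" and q: "q * (t - 1) = t" and AB: "0 \<le> B" "B \<le> A"
  shows "((A powr q + B powr q) / 2) powr (1/q) \<le> ((A + B) powr t + \<bar>A - B\<bar> powr t) powr (1/t) / 2"
proof -
  have "q = t / (t - 1)" using t q by (simp add: field_simps)
  hence qpos: "q > 0" using t by simp
  define X where "X = (A powr q + B powr q) / 2"
  define Y where "Y = (A + B) powr t + \<bar>A - B\<bar> powr t"
  have X0: "0 \<le> X" unfolding X_def by simp
  have Y0: "0 \<le> Y" unfolding Y_def by simp
  have H: "(A powr q + B powr q) powr (t - 1) \<le> Y / 2"
    using clarkson_H[OF t q AB] AB unfolding Y_def by simp
  have "X powr (t - 1) = (A powr q + B powr q) powr (t - 1) / 2 powr (t - 1)"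
    unfolding X_def by (simp add: powr_divide)
  also have "\<dots> \<le> (Y / 2) / 2 powr (t - 1)"
    using H by (intro divide_right_mono) auto
  also have "\<dots> = Y / 2 powr t" by (simp add: powr_diff)
  finally have XY: "X powr (t - 1) \<le> Y / 2 powr t" .
  have "X powr (1/q) = (X powr (t - 1)) powr (1/t)"
  proof -
    have "1/q = (t - 1) * (1/t)" using q t qpos by (simp add: field_simps)
    thus ?thesis by (simp add: powr_powr)
  qed
  also have "\<dots> \<le> (Y / 2 powr t) powr (1/t)"
    using XY t by (intro powr_mono2) auto
  also have "\<dots> = Y powr (1/t) / 2"
    using Y0 t by (simp add: powr_divide powr_powr)
  finally show ?thesis unfolding X_def Y_def .
qed

lemma C1:
  fixes t q A B :: real
  assumes t: "1 < t" "t \<le> 2" and q: "q * (t - 1) = t" and AB: "0 \<le> B" "0 \<le> A"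
  shows "((A powr q + B powr q) / 2) powr (1/q) \<le> ((A + B) powr t + \<bar>A - B\<bar> powr t) powr (1/t) / 2"
proof (cases "B \<le> A")
  case True
  then show ?thesis using C1_aux[OF t q AB(1) True] by simp
next
  case False
  then show ?thesis using C1_aux[OF t q AB(2), of B] by (simp add: add.commute abs_minus_commute)
qed

lemma C2:
  fixes p r A B :: real
  assumes p: "1 < p" "p \<le> 2" and r: "r * (p - 1) = p" and AB: "0 \<le> B" "0 \<le> A"
  shows "((A + B) powr r + \<bar>A - B\<bar> powr r) powr (1/r) / 2 \<le> ((A powr p + B powr p) / 2) powr (1/p)"
proof -
  have "r = p / (p - 1)" using p r by (simp add: field_simps)
  hence rpos: "r > 0" using p by simp
  define X where "X = (A powr p + B powr p) / 2"
  define Y where "Y = (A + B) powr r + \<bar>A - B\<bar> powr r"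
  have X0: "0 \<le> X" unfolding X_def by simp
  have Y0: "0 \<le> Y" unfolding Y_def by simp
  have H0: "((A + B) powr r + \<bar>A - B\<bar> powr r) powr (p - 1)
      \<le> ((A + B + \<bar>A - B\<bar>) powr p + (A + B - \<bar>A - B\<bar>) powr p) / 2"
    using AB by (intro clarkson_H[OF p r]) auto
  have "(A + B + \<bar>A - B\<bar>) powr p + (A + B - \<bar>A - B\<bar>) powr p = 2 powr p * (A powr p + B powr p)"
  proof (cases "B \<le> A")
    case True
    hence "A + B + \<bar>A - B\<bar> = 2 * A" "A + B - \<bar>A - B\<bar> = 2 * B" by auto
    then show ?thesis using AB by (simp add: powr_mult algebra_simps)
  next
    case False
    hence "A + B + \<bar>A - B\<bar> = 2 * B" "A + B - \<bar>A - B\<bar> = 2 * A" by auto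
    then show ?thesis using AB by (simp add: powr_mult algebra_simps)
  qed
  hence H: "Y powr (p - 1) \<le> 2 powr p * X" using H0 unfolding X_def Y_def by simp
  have "Y powr (1/r) = (Y powr (p - 1)) powr (1/p)"
  proof -
    have "1/r = (p - 1) * (1/p)" using r p rpos by (simp add: field_simps)
    thus ?thesis by (simp add: powr_powr)
  qed
  also have "\<dots> \<le> (2 powr p * X) powr (1/p)"
    using H p by (intro powr_mono2) auto
  also have "\<dots> = 2 * X powr (1/p)"
    using X0 p by (simp add: powr_mult powr_powr)
  finally show ?thesis unfolding X_def Y_def by simp
qed



lemma norm_sgn_scale: "e \<noteq> 0 \<Longrightarrow> norm (c *\<^sub>R sgn (e::'a::real_normed_vector)) = \<bar>c\<bar>"
  by (simp add: norm_sgn)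

lemma K_tp_scalar:
  fixes e :: "'a::real_normed_vector"
  assumes e: "e \<noteq> 0" and H: "r_Hanner TYPE('a) r" and r: "0 < r"
  shows "K_tp TYPE('a) p r = Inf {K. K \<ge> 0 \<and> (\<forall>a b::real. 0 \<le> a \<longrightarrow> 0 \<le> b \<longrightarrow>
     (((a + b) powr r + \<bar>a - b\<bar> powr r) / 2) powr (1 / r) \<le> (a powr p + (K * b) powr p) powr (1 / p))}"
  unfolding K_tp_def
proof (rule arg_cong[where f=Inf], rule Collect_cong, rule conj_cong[OF refl])
  fix K :: real assume K: "0 \<le> K"
  show "(\<forall>x y :: 'a. ((norm (x + y) powr r + norm (x - y) powr r) / 2) powr (1 / r) \<le>
     (norm x powr p + norm (K *\<^sub>R y) powr p) powr (1 / p)) =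
    (\<forall>a b::real. 0 \<le> a \<longrightarrow> 0 \<le> b \<longrightarrow>
     (((a + b) powr r + \<bar>a - b\<bar> powr r) / 2) powr (1 / r) \<le> (a powr p + (K * b) powr p) powr (1 / p))"
  proof (intro iffI allI impI)
    fix a b :: real
    assume L: "\<forall>x y :: 'a. ((norm (x + y) powr r + norm (x - y) powr r) / 2) powr (1 / r) \<le>
     (norm x powr p + norm (K *\<^sub>R y) powr p) powr (1 / p)" and ab: "0 \<le> a" "0 \<le> b"
    have "a *\<^sub>R sgn e + b *\<^sub>R sgn e = (a + b) *\<^sub>R sgn e" "a *\<^sub>R sgn e - b *\<^sub>R sgn e = (a - b) *\<^sub>R sgn e"
      "K *\<^sub>R (b *\<^sub>R sgn e) = (K * b) *\<^sub>R sgn e"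
      by (simp_all add: scaleR_add_left scaleR_diff_left)
    thus "(((a + b) powr r + \<bar>a - b\<bar> powr r) / 2) powr (1 / r) \<le> (a powr p + (K * b) powr p) powr (1 / p)"
      using L[rule_format, of "a *\<^sub>R sgn e" "b *\<^sub>R sgn e"] ab K e
      by (simp add: norm_sgn_scale norm_sgn)
  next
    fix x y :: 'a
    assume R: "\<forall>a b::real. 0 \<le> a \<longrightarrow> 0 \<le> b \<longrightarrow>
     (((a + b) powr r + \<bar>a - b\<bar> powr r) / 2) powr (1 / r) \<le> (a powr p + (K * b) powr p) powr (1 / p)"
    have "((norm (x + y) powr r + norm (x - y) powr r) / 2) powr (1 / r)
       \<le> (((norm x + norm y) powr r + \<bar>norm x - norm y\<bar> powr r) / 2) powr (1 / r)"
      using H r unfolding r_Hanner_def by (intro powr_mono2 divide_right_mono) auto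
    also have "\<dots> \<le> (norm x powr p + (K * norm y) powr p) powr (1 / p)"
      using R by simp
    finally show "((norm (x + y) powr r + norm (x - y) powr r) / 2) powr (1 / r) \<le>
     (norm x powr p + norm (K *\<^sub>R y) powr p) powr (1 / p)"
      using K by simp
  qed
qed

lemma Kstar_scalar:
  fixes e :: "'a::real_normed_vector"
  assumes e: "e \<noteq> 0" and H: "t_Hanner TYPE('a) t" and t: "0 < t"
  shows "Kstar_rq TYPE('a) q t = Inf {K. K > 0 \<and> (\<forall>a b::real. 0 \<le> a \<longrightarrow> 0 \<le> b \<longrightarrow>
     (((a + b) powr t + \<bar>a - b\<bar> powr t) / 2) powr (1 / t) \<ge> (a powr q + (inverse K * b) powr q) powr (1 / q))}"
  unfolding Kstar_rq_def
proof (rule arg_cong[where f=Inf], rule Collect_cong, rule conj_cong[OF refl])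
  fix K :: real assume K: "0 < K"
  show "(\<forall>x y :: 'a. ((norm (x + y) powr t + norm (x - y) powr t) / 2) powr (1 / t) \<ge>
     (norm x powr q + norm (inverse K *\<^sub>R y) powr q) powr (1 / q)) =
    (\<forall>a b::real. 0 \<le> a \<longrightarrow> 0 \<le> b \<longrightarrow>
     (((a + b) powr t + \<bar>a - b\<bar> powr t) / 2) powr (1 / t) \<ge> (a powr q + (inverse K * b) powr q) powr (1 / q))"
  proof (intro iffI allI impI)
    fix a b :: real
    assume L: "\<forall>x y :: 'a. ((norm (x + y) powr t + norm (x - y) powr t) / 2) powr (1 / t) \<ge>
     (norm x powr q + norm (inverse K *\<^sub>R y) powr q) powr (1 / q)" and ab: "0 \<le> a" "0 \<le> b"
    have "a *\<^sub>R sgn e + b *\<^sub>R sgn e = (a + b) *\<^sub>R sgn e" "a *\<^sub>R sgn e - b *\<^sub>R sgn e = (a - b) *\<^sub>R sgn e"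
      "inverse K *\<^sub>R (b *\<^sub>R sgn e) = (inverse K * b) *\<^sub>R sgn e"
      by (simp_all add: scaleR_add_left scaleR_diff_left)
    thus "(((a + b) powr t + \<bar>a - b\<bar> powr t) / 2) powr (1 / t) \<ge> (a powr q + (inverse K * b) powr q) powr (1 / q)"
      using L[rule_format, of "a *\<^sub>R sgn e" "b *\<^sub>R sgn e"] ab K e
      by (simp add: norm_sgn_scale norm_sgn)
  next
    fix x y :: 'a
    assume R: "\<forall>a b::real. 0 \<le> a \<longrightarrow> 0 \<le> b \<longrightarrow>
     (((a + b) powr t + \<bar>a - b\<bar> powr t) / 2) powr (1 / t) \<ge> (a powr q + (inverse K * b) powr q) powr (1 / q)"
    have "(norm x powr q + norm (inverse K *\<^sub>R y) powr q) powr (1 / q)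
       = (norm x powr q + (inverse K * norm y) powr q) powr (1 / q)"
      using K by simp
    also have "\<dots> \<le> (((norm x + norm y) powr t + \<bar>norm x - norm y\<bar> powr t) / 2) powr (1 / t)"
      using R by simp
    also have "\<dots> \<le> ((norm (x + y) powr t + norm (x - y) powr t) / 2) powr (1 / t)"
      using H t unfolding t_Hanner_def by (intro powr_mono2 divide_right_mono) auto
    finally show "((norm (x + y) powr t + norm (x - y) powr t) / 2) powr (1 / t) \<ge>
     (norm x powr q + norm (inverse K *\<^sub>R y) powr q) powr (1 / q)" .
  qed
qed



lemma two_scale:
  fixes a b s :: real
  assumes "0 \<le> a" "0 \<le> b" "0 < s"
  shows "((2 * a) powr s + (2 * b) powr s) powr (1/s) = 2 * (a powr s + b powr s) powr (1/s)"
proof -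
  have "(2 * a) powr s + (2 * b) powr s = 2 powr s * (a powr s + b powr s)"
    using assms by (simp add: powr_mult algebra_simps)
  also have "\<dots> powr (1/s) = (2 powr s) powr (1/s) * (a powr s + b powr s) powr (1/s)"
    using assms by (auto intro: powr_mult)
  also have "(2 powr s) powr (1/s) = (2::real)"
    using assms by (simp add: powr_powr)
  finally show ?thesis .
qed

lemma pow_inv_pow: "0 \<le> (z::real) \<Longrightarrow> 0 < s \<Longrightarrow> (z powr s) powr (1/s) = z"
  by (cases "z = 0") (simp_all add: powr_powr)

lemma hanner_sub:
  fixes x y :: "'a::real_normed_vector"
  shows "norm ((x + y) + (x - y)) = 2 * norm x" "norm ((x + y) - (x - y)) = 2 * norm y"
proof -
  have "(x + y) + (x - y) = 2 *\<^sub>R x" "(x + y) - (x - y) = 2 *\<^sub>R y"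
    by (simp_all add: algebra_simps scaleR_2)
  thus "norm ((x + y) + (x - y)) = 2 * norm x" "norm ((x + y) - (x - y)) = 2 * norm y" by simp_all
qed

lemma K_tp_one:
  fixes e :: "'a::real_normed_vector"
  assumes e: "e \<noteq> 0" and t: "1 < t" "t \<le> 2" and H: "t_Hanner TYPE('a) t"
    and P: "1 < P" "P \<le> t / (t - 1)"
  shows "K_tp TYPE('a) t P = 1"
proof -
  define S where "S = {K. K \<ge> 0 \<and> (\<forall>x y :: 'a.
     ((norm (x + y) powr P + norm (x - y) powr P) / 2) powr (1 / P) \<le>
     (norm x powr t + norm (K *\<^sub>R y) powr t) powr (1 / t))}"
  define q where "q = t / (t - 1)"
  have q: "q * (t - 1) = t" unfolding q_def using t by simp
  have "1 \<in> S"
  proof -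
    have "((norm (x + y) powr P + norm (x - y) powr P) / 2) powr (1 / P) \<le>
          (norm x powr t + norm y powr t) powr (1 / t)" for x y :: 'a
    proof -
      define A where "A = norm (x + y)"
      define B where "B = norm (x - y)"
      have AB: "0 \<le> A" "0 \<le> B" unfolding A_def B_def by auto
      have "((A powr P + B powr P) / 2) powr (1 / P) \<le> ((A powr q + B powr q) / 2) powr (1 / q)"
        using P AB unfolding q_def by (intro power_mean2) auto
      also have "\<dots> \<le> ((A + B) powr t + \<bar>A - B\<bar> powr t) powr (1/t) / 2"
        using C1[OF t q AB(2,1)] .
      also have "\<dots> \<le> ((2 * norm x) powr t + (2 * norm y) powr t) powr (1/t) / 2"
      proof -
        have "(A + B) powr t + \<bar>A - B\<bar> powr t \<le> (2 * norm x) powr t + (2 * norm y) powr t"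
          using H[unfolded t_Hanner_def, rule_format, of "x + y" "x - y"]
          unfolding A_def B_def hanner_sub by simp
        thus ?thesis using t by (intro divide_right_mono powr_mono2) auto
      qed
      also have "\<dots> = (norm x powr t + norm y powr t) powr (1 / t)"
        using two_scale[of "norm x" "norm y" t] t by simp
      finally show ?thesis unfolding A_def B_def .
    qed
    thus ?thesis unfolding S_def by simp
  qed
  moreover have "1 \<le> K" if "K \<in> S" for K
  proof -
    have K0: "K \<ge> 0" using that unfolding S_def by simp
    have "((norm (0 + e) powr P + norm (0 - e) powr P) / 2) powr (1 / P) \<le>
          (norm (0::'a) powr t + norm (K *\<^sub>R e) powr t) powr (1 / t)"
      using that unfolding S_def by blast
    hence "norm e \<le> K * norm e"
      using K0 t P pow_inv_pow[of "norm e" P] pow_inv_pow[of "K * norm e" t] by simp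
    thus ?thesis using e by simp
  qed
  ultimately have "Inf S = 1" by (intro cInf_eq_minimum)
  thus ?thesis unfolding K_tp_def S_def .
qed

lemma Kstar_one:
  fixes e :: "'a::real_normed_vector"
  assumes e: "e \<noteq> 0" and r: "2 \<le> r" and H: "r_Hanner TYPE('a) r"
    and Q: "r / (r - 1) \<le> Q"
  shows "Kstar_rq TYPE('a) r Q = 1"
proof -
  define S where "S = {K. K > 0 \<and> (\<forall>x y :: 'a.
     ((norm (x + y) powr Q + norm (x - y) powr Q) / 2) powr (1 / Q) \<ge>
     (norm x powr r + norm (inverse K *\<^sub>R y) powr r) powr (1 / r))}"
  define p where "p = r / (r - 1)"
  have p: "1 < p" "p \<le> 2" unfolding p_def using r by (auto simp: field_simps)
  have rp: "r * (p - 1) = p" unfolding p_def using r by (simp add: field_simps)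
  have "1 \<in> S"
  proof -
    have "((norm (x + y) powr Q + norm (x - y) powr Q) / 2) powr (1 / Q) \<ge>
          (norm x powr r + norm y powr r) powr (1 / r)" for x y :: 'a
    proof -
      define A where "A = norm (x + y)"
      define B where "B = norm (x - y)"
      have AB: "0 \<le> A" "0 \<le> B" unfolding A_def B_def by auto
      have "(norm x powr r + norm y powr r) powr (1 / r)
          = ((2 * norm x) powr r + (2 * norm y) powr r) powr (1/r) / 2"
        using two_scale[of "norm x" "norm y" r] r by simp
      also have "\<dots> \<le> ((A + B) powr r + \<bar>A - B\<bar> powr r) powr (1/r) / 2"
      proof -
        have "(2 * norm x) powr r + (2 * norm y) powr r \<le> (A + B) powr r + \<bar>A - B\<bar> powr r"
          using H[unfolded r_Hanner_def, rule_format, of "x + y" "x - y"]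
          unfolding A_def B_def hanner_sub by simp
        thus ?thesis using r by (intro divide_right_mono powr_mono2) auto
      qed
      also have "\<dots> \<le> ((A powr p + B powr p) / 2) powr (1/p)"
        using C2[OF p rp AB(2,1)] .
      also have "\<dots> \<le> ((A powr Q + B powr Q) / 2) powr (1 / Q)"
        using p Q AB unfolding p_def by (intro power_mean2) auto
      finally show ?thesis unfolding A_def B_def .
    qed
    thus ?thesis unfolding S_def by simp
  qed
  moreover have "1 \<le> K" if "K \<in> S" for K
  proof -
    have K0: "K > 0" using that unfolding S_def by simp
    have "((norm (0 + e) powr Q + norm (0 - e) powr Q) / 2) powr (1 / Q) \<ge>
          (norm (0::'a) powr r + norm (inverse K *\<^sub>R e) powr r) powr (1 / r)"
      using that unfolding S_def by blast
    moreover have "0 < Q" using Q p unfolding p_def by linarith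
    ultimately have "inverse K * norm e \<le> norm e"
      using K0 r pow_inv_pow[of "norm e" Q] pow_inv_pow[of "inverse K * norm e" r] by simp
    hence "norm e \<le> K * norm e" using K0 by (simp add: field_simps)
    thus ?thesis using e by simp
  qed
  ultimately have "Inf S = 1" by (intro cInf_eq_minimum)
  thus ?thesis unfolding Kstar_rq_def S_def .
qed


theorem proposition3p5:
  assumes "\<exists>x :: 'a::real_normed_vector. x \<noteq> 0"
  shows "(\<forall>t. 1 < t \<and> t \<le> 2 \<and> t_Hanner TYPE('a) t \<longrightarrow>
            (\<forall>q. 2 \<le> q \<longrightarrow> Kstar_rq TYPE('a) q t = Cstar_rq q t) \<and>
            (\<forall>p. 1 < p \<and> p \<le> t / (t - 1) \<longrightarrow> K_tp TYPE('a) t p = 1))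
       \<and> (\<forall>r. 2 \<le> r \<and> r_Hanner TYPE('a) r \<longrightarrow>
            (\<forall>p. 1 < p \<and> p \<le> 2 \<longrightarrow> K_tp TYPE('a) p r = C_tp p r) \<and>
            (\<forall>q. r / (r - 1) \<le> q \<longrightarrow> Kstar_rq TYPE('a) r q = 1))"
proof -
  obtain e :: 'a where e: "e \<noteq> 0" using assms by blast
  have one: "(1::complex) \<noteq> 0" by simp
  show ?thesis
  proof (intro conjI allI impI)
    fix t q :: real
    assume A: "1 < t \<and> t \<le> 2 \<and> t_Hanner TYPE('a) t" "2 \<le> q"
    have Hc: "t_Hanner TYPE(complex) t" using A by (intro complex_t_Hanner) auto
    have HA: "t_Hanner TYPE('a) t" and t0: "0 < t" using A by auto
    show "Kstar_rq TYPE('a) q t = Cstar_rq q t"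
      unfolding Cstar_rq_def Kstar_scalar[OF e HA t0, where q=q] Kstar_scalar[OF one Hc t0, where q=q] ..
  next
    fix t p :: real
    assume A: "1 < t \<and> t \<le> 2 \<and> t_Hanner TYPE('a) t" "1 < p \<and> p \<le> t / (t - 1)"
    show "K_tp TYPE('a) t p = 1" using A by (intro K_tp_one[OF e]) auto
  next
    fix r p :: real
    assume A: "2 \<le> r \<and> r_Hanner TYPE('a) r" "1 < p \<and> p \<le> 2"
    have Hc: "r_Hanner TYPE(complex) r" using A by (intro complex_r_Hanner) auto
    have r0: "0 < r" using A by simp
    have HA: "r_Hanner TYPE('a) r" using A by auto
    show "K_tp TYPE('a) p r = C_tp p r"
      unfolding C_tp_def K_tp_scalar[OF e HA r0, where p=p] K_tp_scalar[OF one Hc r0, where p=p] ..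
  next
    fix r q :: real
    assume A: "2 \<le> r \<and> r_Hanner TYPE('a) r" "r / (r - 1) \<le> q"
    show "Kstar_rq TYPE('a) r q = 1" using A by (intro Kstar_one[OF e]) auto
  qed
qed

end
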